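(* For every $s \in \mathcal{S}$, $r(s) \equiv s(0) \pmod 2$.
   Context: For a step function $s$ on $[0,\tfrac12)$ let $J_s(t)=\tfrac12(\lim_{\tau\downarrow t}s(\tau)-\lim_{\tau\uparrow t}s(\tau))$. A Laurent polynomial $\delta\in\mathbf{Q}[t,t^{-1}]$ is symmetric if $\delta(t^{-1})=\delta(t)$. $\mathcal{S}$ is the set of integer-valued step functions $s$ on $[0,\tfrac12)$ such that: (1) $s$ has finitely many discontinuities and is continuous at $0$; (2) for all $t$, $s(t)=\tfrac12(\lim_{\tau\downarrow t}s(\tau)+\lim_{\tau\uparrow t}s(\tau))$; (3) $J_s(t)\in\mathbf{Z}$ for all $t$; (4) if $J_s(t)\neq0$ then $e^{2\pi i t}$ is a root of an irreducible symmetric rational polynomial; (5) if $\delta(e^{2\pi i\alpha_1})=\delta(e^{2\pi i\alpha_2})=0$ for some symmetric irreducible rational polynomial $\delta$, then $J_s(\alpha_1)\equiv J_s(\alpha_2)\pmod 2$. For $s\in\mathcal{S}$: $T_s=\{t: J_s(t)\neq0\}$; $T_{s,\delta}=\{t\in T_s:\delta(e^{2\pi i t})=0\}$; $r_\delta(s)=\max_{t\in T_{s,\delta}}|s(t)|+\max_{t\in T_{s,\delta}}|J_s(t)|$ (for $T_{s,\delta}\ne\emptyset$); $r(s)=\max\big(\{r_\delta(s)\}_\delta\cup\{s(0)\}\big)$. *)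

theory Defs
  imports Complex_Main "HOL-Computational_Algebra.Polynomial" "HOL-Computational_Algebra.Factorial_Ring"
begin

text \<open>Step functions are modelled as s :: real => int; only the values on [0,1/2) matter.\<close>

definition step_fun :: "(real \<Rightarrow> int) \<Rightarrow> bool" where
  "step_fun s \<longleftrightarrow> (\<exists>D. finite D \<and> D \<subseteq> {0<..<1/2} \<and>
     (\<forall>t\<in>{0..<1/2} - D. \<exists>e>0. \<forall>\<tau>\<in>{0..<1/2}. \<bar>\<tau> - t\<bar> < e \<longrightarrow> s \<tau> = s t))"

definition lim_right :: "(real \<Rightarrow> int) \<Rightarrow> real \<Rightarrow> real" where
  "lim_right s t = Lim (at_right t) (\<lambda>\<tau>. real_of_int (s \<tau>))"

definition lim_left :: "(real \<Rightarrow> int) \<Rightarrow> real \<Rightarrow> real" where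
  "lim_left s t = Lim (at_left t) (\<lambda>\<tau>. real_of_int (s \<tau>))"

text \<open>Jump function; at t = 0 (left end of the domain, where s is continuous) it is 0.\<close>
definition Jmp :: "(real \<Rightarrow> int) \<Rightarrow> real \<Rightarrow> real" where
  "Jmp s t = (if t \<le> 0 then 0 else (lim_right s t - lim_left s t) / 2)"

text \<open>A nonzero Laurent polynomial in Q[t,t^-1] is uniquely written t^k * p(t) with
  p in Q[t], p(0) ~= 0.  Evaluation at a nonzero complex number:\<close>
definition laurent_eval :: "int \<Rightarrow> rat poly \<Rightarrow> complex \<Rightarrow> complex" where
  "laurent_eval k p z = z powi k * poly (map_poly of_rat p) z"

text \<open>t^k p(t) is irreducible in Q[t,t^-1] (units are c t^n) iff p is irreducible in Q[t]
  (given p(0) ~= 0); it is symmetric iff delta(t^-1) = delta(t).\<close>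
definition sym_irred :: "int \<Rightarrow> rat poly \<Rightarrow> bool" where
  "sym_irred k p \<longleftrightarrow> poly p 0 \<noteq> 0 \<and> irreducible p \<and>
     (\<forall>z::complex. z \<noteq> 0 \<longrightarrow> laurent_eval k p (inverse z) = laurent_eval k p z)"

definition root_at :: "int \<Rightarrow> rat poly \<Rightarrow> real \<Rightarrow> bool" where
  "root_at k p t \<longleftrightarrow> laurent_eval k p (cis (2 * pi * t)) = 0"

definition in_S :: "(real \<Rightarrow> int) \<Rightarrow> bool" where
  "in_S s \<longleftrightarrow> step_fun s \<and>
     (\<forall>t\<in>{0<..<1/2}. real_of_int (s t) = (lim_right s t + lim_left s t) / 2) \<and>
     (\<forall>t\<in>{0..<1/2}. Jmp s t \<in> \<int>) \<and>
     (\<forall>t\<in>{0..<1/2}. Jmp s t \<noteq> 0 \<longrightarrow> (\<exists>k p. sym_irred k p \<and> root_at k p t)) \<and>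
     (\<forall>k p a1 a2. sym_irred k p \<and> a1 \<in> {0..<1/2} \<and> a2 \<in> {0..<1/2} \<and>
        root_at k p a1 \<and> root_at k p a2 \<longrightarrow> (\<exists>m::int. Jmp s a1 - Jmp s a2 = 2 * of_int m))"

definition T_set :: "(real \<Rightarrow> int) \<Rightarrow> real set" where
  "T_set s = {t\<in>{0..<1/2}. Jmp s t \<noteq> 0}"

definition T_delta :: "(real \<Rightarrow> int) \<Rightarrow> int \<Rightarrow> rat poly \<Rightarrow> real set" where
  "T_delta s k p = {t\<in>T_set s. root_at k p t}"

definition r_delta :: "(real \<Rightarrow> int) \<Rightarrow> int \<Rightarrow> rat poly \<Rightarrow> real" where
  "r_delta s k p = Max ((\<lambda>t. \<bar>real_of_int (s t)\<bar>) ` T_delta s k p)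
                 + Max ((\<lambda>t. \<bar>Jmp s t\<bar>) ` T_delta s k p)"

definition r_inv :: "(real \<Rightarrow> int) \<Rightarrow> real" where
  "r_inv s = Max ({r_delta s k p | k p. sym_irred k p \<and> T_delta s k p \<noteq> {}}
                  \<union> {real_of_int (s 0)})"

end

theory Submission
  imports Defs
begin

lemma fin_avoid:
  fixes X :: "real set"
  assumes "finite X"
  shows "\<exists>e>0. \<forall>x\<in>X. x \<noteq> a \<longrightarrow> e \<le> \<bar>x - a\<bar>"
  using assms
proof (induction X rule: finite_induct)
  case empty
  then show ?case by (intro exI[of _ 1]) auto
next
  case (insert y X)
  then obtain e where e: "e > 0" "\<forall>x\<in>X. x \<noteq> a \<longrightarrow> e \<le> \<bar>x - a\<bar>" by blast
  show ?case
  proof (cases "y = a")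
    case True
    then show ?thesis using e by auto
  next
    case False
    then show ?thesis using e
      by (intro exI[of _ "min e \<bar>y - a\<bar>"]) auto
  qed
qed

lemma loc_const:
  fixes s :: "real \<Rightarrow> int"
  assumes loc: "\<forall>t\<in>{0..<1/2} - D. \<exists>e>0. \<forall>\<tau>\<in>{0..<1/2}. \<bar>\<tau> - t\<bar> < e \<longrightarrow> s \<tau> = s t"
    and I: "connected I" "I \<subseteq> {0..<1/2} - D" and xy: "x \<in> I" "y \<in> I"
  shows "s x = s y"
proof (rule connected_local_const[OF I(1) xy])
  show "\<forall>a\<in>I. \<forall>\<^sub>F b in at a within I. s a = s b"
  proof
    fix a assume a: "a \<in> I"
    then obtain e where e: "e > 0" "\<forall>\<tau>\<in>{0..<1/2}. \<bar>\<tau> - a\<bar> < e \<longrightarrow> s \<tau> = s a"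
      using loc I(2) by blast
    show "\<forall>\<^sub>F b in at a within I. s a = s b"
      unfolding eventually_at
      using e I(2) by (intro exI[of _ e]) (auto simp: dist_real_def)
  qed
qed

definition ev2 :: "real \<Rightarrow> real \<Rightarrow> bool" where
  "ev2 a b \<longleftrightarrow> (\<exists>m::int. a - b = 2 * of_int m)"

lemma ev2_trans: "ev2 a b \<Longrightarrow> ev2 b c \<Longrightarrow> ev2 a c"
  unfolding ev2_def
proof (elim exE)
  fix m n :: int assume "a - b = 2 * of_int m" "b - c = 2 * of_int n"
  then have "a - c = 2 * of_int (m + n)" by simp
  then show "\<exists>m::int. a - c = 2 * of_int m" by blast
qed

lemma ev2_sym: "ev2 a b \<Longrightarrow> ev2 b a"
  unfolding ev2_def
proof (elim exE)
  fix m :: int assume "a - b = 2 * of_int m"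
  then have "b - a = 2 * of_int (- m)" by simp
  then show "\<exists>m::int. b - a = 2 * of_int m" by blast
qed

lemma ev2_add: "ev2 a b \<Longrightarrow> ev2 c d \<Longrightarrow> ev2 (a + c) (b + d)"
  unfolding ev2_def
proof (elim exE)
  fix m n :: int assume "a - b = 2 * of_int m" "c - d = 2 * of_int n"
  then have "(a + c) - (b + d) = 2 * of_int (m + n)" by simp
  then show "\<exists>m::int. (a + c) - (b + d) = 2 * of_int m" by blast
qed

lemma ev2_refl: "ev2 a a"
  unfolding ev2_def by (intro exI[of _ 0]) simp

lemma ev2_abs: "ev2 \<bar>of_int j\<bar> (of_int j)"
proof (cases "j \<ge> 0")
  case True then show ?thesis by (simp add: ev2_refl)
next
  case False
  then have "\<bar>(of_int j :: real)\<bar> - of_int j = 2 * of_int (- j)" by simp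
  then show ?thesis unfolding ev2_def by blast
qed

lemma ev2_double: "ev2 (a + 2 * of_int j) a"
  unfolding ev2_def by (intro exI[of _ j]) simp

theorem mainTheorem3:
  fixes s :: "real \<Rightarrow> int"
  assumes "in_S s"
  shows "\<exists>m::int. r_inv s = real_of_int (s 0) + 2 * of_int m"
proof -
  from assms obtain D where D: "finite D" "D \<subseteq> {0<..<1/2}"
    and loc: "\<forall>t\<in>{0..<1/2} - D. \<exists>e>0. \<forall>\<tau>\<in>{0..<1/2}. \<bar>\<tau> - t\<bar> < e \<longrightarrow> s \<tau> = s t"
    unfolding in_S_def step_fun_def by blast
  have mid: "\<forall>t\<in>{0<..<1/2}. real_of_int (s t) = (lim_right s t + lim_left s t) / 2"
    and jint: "\<forall>t\<in>{0..<1/2}. Jmp s t \<in> \<int>"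
    and c5: "\<And>k p a1 a2. sym_irred k p \<Longrightarrow> a1 \<in> {0..<1/2} \<Longrightarrow> a2 \<in> {0..<1/2} \<Longrightarrow>
        root_at k p a1 \<Longrightarrow> root_at k p a2 \<Longrightarrow> (\<exists>m::int. Jmp s a1 - Jmp s a2 = 2 * of_int m)"
    using assms unfolding in_S_def by blast+
  let ?A = "{0..<1/2} - D"
  have const: "\<And>I x y. connected I \<Longrightarrow> I \<subseteq> ?A \<Longrightarrow> x \<in> I \<Longrightarrow> y \<in> I \<Longrightarrow> s x = s y"
    using loc_const[OF loc] by blast
  have J0: "Jmp s t = 0" if t: "t \<in> ?A" for t
  proof (cases "t \<le> 0")
    case True then show ?thesis by (simp add: Jmp_def)
  next
    case False
    obtain e where e: "e > 0" "\<forall>\<tau>\<in>{0..<1/2}. \<bar>\<tau> - t\<bar> < e \<longrightarrow> s \<tau> = s t"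
      using loc t by blast
    have tl: "t < 1/2" "0 < t" using t False by auto
    have "\<forall>\<^sub>F \<tau> in at_right t. real_of_int (s \<tau>) = real_of_int (s t)"
      unfolding eventually_at_right[OF tl(1)]
    proof (intro exI[of _ "min (t + e) (1/2)"] conjI allI impI)
      show "t < min (t + e) (1/2)" using e tl by simp
      fix y assume "t < y" "y < min (t + e) (1/2)"
      then have "y \<in> {0..<1/2}" "\<bar>y - t\<bar> < e" using tl by auto
      then show "real_of_int (s y) = real_of_int (s t)" using e(2) by simp
    qed
    then have R: "lim_right s t = s t" unfolding lim_right_def
      by (intro tendsto_Lim trivial_limit_at_right_real tendsto_eventually)
    have "\<forall>\<^sub>F \<tau> in at_left t. real_of_int (s \<tau>) = real_of_int (s t)"
      unfolding eventually_at_left[OF tl(2)]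
    proof (intro exI[of _ "max (t - e) 0"] conjI allI impI)
      show "max (t - e) 0 < t" using e tl by simp
      fix y assume "max (t - e) 0 < y" "y < t"
      then have "y \<in> {0..<1/2}" "\<bar>y - t\<bar> < e" using tl by auto
      then show "real_of_int (s y) = real_of_int (s t)" using e(2) by simp
    qed
    then have L: "lim_left s t = s t" unfolding lim_left_def
      by (intro tendsto_Lim trivial_limit_at_left_real tendsto_eventually)
    show ?thesis using R L by (simp add: Jmp_def)
  qed
  have Dloc: "\<exists>e>0. d - e \<ge> 0 \<and> d + e \<le> 1/2 \<and> {d - e<..<d} \<subseteq> ?A \<and> {d<..<d + e} \<subseteq> ?A \<and>
      lim_left s d = s (d - e/2) \<and> lim_right s d = s (d + e/2)" if d: "d \<in> D" for d
  proof -
    obtain e0 where e0: "e0 > 0" "\<forall>x\<in>D. x \<noteq> d \<longrightarrow> e0 \<le> \<bar>x - d\<bar>"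
      using fin_avoid[OF D(1)] by blast
    have dd: "0 < d" "d < 1/2" using d D(2) by auto
    define e where "e = min e0 (min d (1/2 - d))"
    have e: "e > 0" "e \<le> e0" "e \<le> d" "e \<le> 1/2 - d" using e0 dd by (auto simp: e_def)
    have AL: "{d - e<..<d} \<subseteq> ?A"
    proof
      fix x assume x: "x \<in> {d - e<..<d}"
      have xd: "x \<noteq> d" "\<bar>x - d\<bar> < e0" using x e by auto
      have "x \<notin> D"
      proof
        assume "x \<in> D"
        then have "e0 \<le> \<bar>x - d\<bar>" using e0(2) xd(1) by blast
        then show False using xd(2) by linarith
      qed
      moreover have "x \<in> {0..<1/2}" using x e dd by auto
      ultimately show "x \<in> ?A" by blast
    qed
    have AR: "{d<..<d + e} \<subseteq> ?A"
    proof
      fix x assume x: "x \<in> {d<..<d + e}"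
      have xd: "x \<noteq> d" "\<bar>x - d\<bar> < e0" using x e by auto
      have "x \<notin> D"
      proof
        assume "x \<in> D"
        then have "e0 \<le> \<bar>x - d\<bar>" using e0(2) xd(1) by blast
        then show False using xd(2) by linarith
      qed
      moreover have "x \<in> {0..<1/2}" using x e dd by auto
      ultimately show "x \<in> ?A" by blast
    qed
    have "\<forall>\<^sub>F \<tau> in at_left d. real_of_int (s \<tau>) = real_of_int (s (d - e/2))"
      unfolding eventually_at_left[OF dd(1)]
    proof (intro exI[of _ "d - e"] conjI allI impI)
      fix y assume "d - e < y" "y < d"
      then have "y \<in> {d - e<..<d}" by simp
      moreover have "d - e / 2 \<in> {d - e<..<d}" using e by simp
      ultimately show "real_of_int (s y) = real_of_int (s (d - e / 2))"
        using const[OF connected_Ioo AL] by metis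
    qed (use e in auto)
    then have L: "lim_left s d = s (d - e/2)" unfolding lim_left_def
      by (intro tendsto_Lim trivial_limit_at_left_real tendsto_eventually)
    have "\<forall>\<^sub>F \<tau> in at_right d. real_of_int (s \<tau>) = real_of_int (s (d + e/2))"
      unfolding eventually_at_right[OF dd(2)]
    proof (intro exI[of _ "d + e"] conjI allI impI)
      fix y assume "d < y" "y < d + e"
      then have "y \<in> {d<..<d + e}" by simp
      moreover have "d + e / 2 \<in> {d<..<d + e}" using e by simp
      ultimately show "real_of_int (s y) = real_of_int (s (d + e / 2))"
        using const[OF connected_Ioo AR] by metis
    qed (use e in auto)
    then have R: "lim_right s d = s (d + e/2)" unfolding lim_right_def
      by (intro tendsto_Lim trivial_limit_at_right_real tendsto_eventually)
    have "d - e \<ge> 0" "d + e \<le> 1/2" using e by auto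
    then show ?thesis using e(1) AL AR L R by blast
  qed
  have par: "\<forall>x\<in>?A. card (D \<inter> {..<x}) = n \<longrightarrow> ev2 (s x) (s 0)" for n
  proof (induction n rule: less_induct)
    case (less n)
    show ?case
    proof (intro ballI impI)
      fix x assume x: "x \<in> ?A" and n: "card (D \<inter> {..<x}) = n"
      show "ev2 (s x) (s 0)"
      proof (cases "D \<inter> {..<x} = {}")
        case True
        have sub0: "{0..x} \<subseteq> ?A"
        proof
          fix y assume y: "y \<in> {0..x}"
          have "y \<notin> D"
          proof
            assume yD: "y \<in> D"
            show False
            proof (cases "y < x")
              case True then show False using yD \<open>D \<inter> {..<x} = {}\<close> by blast
            next
              case False then have "y = x" using y by simp
              then show False using yD x by blast
            qed
          qed
          then show "y \<in> ?A" using y x by auto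
        qed
        have "0 \<in> {0..x}" "x \<in> {0..x}" using x by auto
        then have "s x = s 0" using const[OF connected_Icc sub0] by metis
        then show ?thesis by (simp add: ev2_refl)
      next
        case False
        define d where "d = Max (D \<inter> {..<x})"
        have fin: "finite (D \<inter> {..<x})" using D(1) by auto
        have dB: "d \<in> D \<inter> {..<x}" using Max_in[OF fin False] d_def by simp
        have dmax: "\<And>y. y \<in> D \<inter> {..<x} \<Longrightarrow> y \<le> d" using Max_ge[OF fin] d_def by simp
        obtain e where e: "e > 0" "d - e \<ge> 0" "d + e \<le> 1/2" "{d - e<..<d} \<subseteq> ?A" "{d<..<d + e} \<subseteq> ?A"
          "lim_left s d = s (d - e/2)" "lim_right s d = s (d + e/2)"
          using Dloc[of d] dB by blast
        have I1: "{d<..x} \<subseteq> ?A"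
        proof
          fix y assume y: "y \<in> {d<..x}"
          have "y \<notin> D"
          proof
            assume "y \<in> D"
            moreover have "y \<noteq> x" using x \<open>y \<in> D\<close> by auto
            ultimately have "y \<le> d" using dmax y by auto
            then show False using y by auto
          qed
          then show "y \<in> ?A" using y x dB D(2) by auto
        qed
        define y where "y = min x (d + e/2)"
        have y: "d < y" "y \<le> x" "y < d + e" using dB e by (auto simp: y_def)
        have "x \<in> {d<..x}" "y \<in> {d<..x}" using y by auto
        then have "s x = s y" using const[OF connected_Ioc I1] by metis
        also have "y \<in> {d<..<d+e}" "d + e/2 \<in> {d<..<d+e}" using y e by auto
        then have "s y = s (d + e/2)" using const[OF connected_Ioo e(5)] by metis
        finally have sx: "s x = s (d + e/2)" .
        define u where "u = d - e/2"
        have "u \<in> {d - e<..<d}" using e(1) by (simp add: u_def)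
        then have uA: "u \<in> ?A" using e(4) by blast
        have sub: "D \<inter> {..<u} \<subset> D \<inter> {..<x}"
        proof
          show "D \<inter> {..<u} \<subseteq> D \<inter> {..<x}" using dB e by (auto simp: u_def)
          have "d \<in> D \<inter> {..<x}" "d \<notin> D \<inter> {..<u}" using dB e(1) by (auto simp: u_def)
          then show "D \<inter> {..<u} \<noteq> D \<inter> {..<x}" by blast
        qed
        have "card (D \<inter> {..<u}) < n" using psubset_card_mono[OF fin sub] n by simp
        then have IHu: "ev2 (s u) (s 0)" using less uA by blast
        have dd: "d \<in> {0<..<1/2}" "d \<in> {0..<1/2}" using dB D(2) by auto
        obtain j where j: "Jmp s d = of_int j" using jint dd(2) Ints_cases by metis
        have "Jmp s d = (lim_right s d - lim_left s d) / 2" using dd by (simp add: Jmp_def)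
        then have "real_of_int (s (d + e/2)) - real_of_int (s u) = 2 * of_int j"
          using j e(6,7) by (simp add: u_def)
        then have "real_of_int (s x) = s u + 2 * of_int j"
          using sx by simp
        then have "ev2 (s x) (s u)" using ev2_double by simp
        then show ?thesis using IHu ev2_trans by blast
      qed
    qed
  qed
  have parA: "\<And>x. x \<in> ?A \<Longrightarrow> ev2 (s x) (s 0)" using par by blast
  have TD: "T_set s \<subseteq> D" using J0 by (auto simp: T_set_def)
  have Tpar: "ev2 (s t - Jmp s t) (s 0)" if t: "t \<in> T_set s" for t
  proof -
    have tD: "t \<in> D" using TD t by auto
    obtain e where e: "e > 0" "t - e \<ge> 0" "{t - e<..<t} \<subseteq> ?A"
          "lim_left s t = s (t - e/2)"
      using Dloc[OF tD] by blast
    have tt: "t \<in> {0<..<1/2}" using tD D(2) by auto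
    have "s t - Jmp s t = lim_left s t"
      using mid tt by (simp add: Jmp_def field_simps)
    also have "\<dots> = s (t - e/2)" using e by simp
    finally have "s t - Jmp s t = s (t - e/2)" .
    moreover have "t - e/2 \<in> {t - e<..<t}" using e(1) by simp
    then have "t - e/2 \<in> ?A" using e(3) by blast
    ultimately show ?thesis using parA by simp
  qed
  have Tint: "\<exists>j::int. Jmp s t = of_int j" if "t \<in> T_set s" for t
    using jint that Ints_cases unfolding T_set_def by blast
  have finT: "finite (T_set s)" using TD D(1) finite_subset by blast
  have rpar: "ev2 (r_delta s k p) (s 0)" if kp: "sym_irred k p" "T_delta s k p \<noteq> {}" for k p
  proof -
    let ?T = "T_delta s k p"
    have TT: "?T \<subseteq> T_set s" by (auto simp: T_delta_def)
    have finTT: "finite ?T" using finite_subset[OF TT finT] .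
    obtain t0 where t0: "t0 \<in> ?T" using kp by blast
    have Jpar: "ev2 (Jmp s t) (Jmp s t0)" if t: "t \<in> ?T" for t
      using c5[OF kp(1), of t t0] t t0 unfolding ev2_def T_delta_def T_set_def by blast
    have spar: "ev2 (s t) (s 0 + Jmp s t0)" if t: "t \<in> ?T" for t
    proof -
      have "ev2 (s t - Jmp s t + Jmp s t) (s 0 + Jmp s t0)"
        using ev2_add[OF Tpar Jpar] t TT by blast
      then show ?thesis by simp
    qed
    obtain t1 where t1: "t1 \<in> ?T" "Max ((\<lambda>t. \<bar>real_of_int (s t)\<bar>) ` ?T) = \<bar>real_of_int (s t1)\<bar>"
    proof -
      have "Max ((\<lambda>t. \<bar>real_of_int (s t)\<bar>) ` ?T) \<in> (\<lambda>t. \<bar>real_of_int (s t)\<bar>) ` ?T"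
        using finTT kp(2) by (intro Max_in) auto
      then show ?thesis using that by blast
    qed
    obtain t2 where t2: "t2 \<in> ?T" "Max ((\<lambda>t. \<bar>Jmp s t\<bar>) ` ?T) = \<bar>Jmp s t2\<bar>"
    proof -
      have "Max ((\<lambda>t. \<bar>Jmp s t\<bar>) ` ?T) \<in> (\<lambda>t. \<bar>Jmp s t\<bar>) ` ?T"
        using finTT kp(2) by (intro Max_in) auto
      then show ?thesis using that by blast
    qed
    obtain j2 where j2: "Jmp s t2 = of_int j2" using Tint t2(1) TT by blast
    have a1: "ev2 \<bar>real_of_int (s t1)\<bar> (s 0 + Jmp s t0)"
      using ev2_trans[OF ev2_abs spar[OF t1(1)]] .
    have a2: "ev2 \<bar>Jmp s t2\<bar> (Jmp s t0)"
    proof -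
      have "ev2 \<bar>real_of_int j2\<bar> (real_of_int j2)" by (rule ev2_abs)
      then have "ev2 \<bar>Jmp s t2\<bar> (Jmp s t2)" using j2 by simp
      then show ?thesis using Jpar[OF t2(1)] ev2_trans by blast
    qed
    have "ev2 (r_delta s k p) (s 0 + Jmp s t0 + Jmp s t0)"
      unfolding r_delta_def t1(2) t2(2) using ev2_add[OF a1 a2] .
    moreover have "ev2 (s 0 + Jmp s t0 + Jmp s t0) (s 0)"
    proof -
      obtain j0 where "Jmp s t0 = of_int j0" using Tint t0 TT by blast
      then show ?thesis using ev2_double[of "s 0" j0] by (simp add: algebra_simps)
    qed
    ultimately show ?thesis using ev2_trans by blast
  qed
  let ?R = "{r_delta s k p | k p. sym_irred k p \<and> T_delta s k p \<noteq> {}}"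
  have "?R \<subseteq> (\<lambda>T. Max ((\<lambda>t. \<bar>real_of_int (s t)\<bar>) ` T) + Max ((\<lambda>t. \<bar>Jmp s t\<bar>) ` T)) ` Pow (T_set s)"
    by (auto simp: r_delta_def T_delta_def)
  then have finR: "finite ?R" using finT finite_subset by blast
  have "r_inv s \<in> ?R \<union> {real_of_int (s 0)}"
    unfolding r_inv_def using finR by (intro Max_in) auto
  then have "ev2 (r_inv s) (s 0)"
  proof
    assume "r_inv s \<in> ?R"
    then obtain k p where "r_inv s = r_delta s k p" "sym_irred k p" "T_delta s k p \<noteq> {}" by blast
    then show ?thesis using rpar by simp
  next
    assume "r_inv s \<in> {real_of_int (s 0)}"
    then show ?thesis using ev2_refl by simp
  qed
  then show ?thesis unfolding ev2_def by (auto simp: algebra_simps)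
qed

end
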